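(* Let $G$ and $H$ be groups and let $f:G\to H$ be a quasimorphism, i.e. a function whose defect set $D(f)=\{f(y)^{-1}f(x)^{-1}f(xy)\mid x,y\in G\}$ is finite. Suppose $f$ is symmetric ($f(x^{-1})=f(x)^{-1}$ for all $x\in G$) and unital ($f(e_G)=e_H$). If $\Xi$ is an approximate subgroup of $G$, then $f(\Xi)$ is an approximate subgroup of $H$.
   Context: A subset $\Lambda$ of a group $G$ is an approximate subgroup if $\Lambda=\Lambda^{-1}$, $e\in\Lambda$, and there exists a finite subset $F\subset G$ such that $\Lambda^2=\{ab\mid a,b\in\Lambda\}\subseteq\Lambda F$. *)

theory Defs
  imports "HOL-Algebra.Group"
begin

definition set_prod :: "('a, 'b) monoid_scheme \<Rightarrow> 'a set \<Rightarrow> 'a set \<Rightarrow> 'a set" where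
  "set_prod G A B = {a \<otimes>\<^bsub>G\<^esub> b | a b. a \<in> A \<and> b \<in> B}"

definition approx_subgroup :: "('a, 'b) monoid_scheme \<Rightarrow> 'a set \<Rightarrow> bool" where
  "approx_subgroup G \<Lambda> \<longleftrightarrow>
     \<Lambda> \<subseteq> carrier G \<and>
     (\<lambda>x. inv\<^bsub>G\<^esub> x) ` \<Lambda> = \<Lambda> \<and>
     \<one>\<^bsub>G\<^esub> \<in> \<Lambda> \<and>
     (\<exists>F. finite F \<and> F \<subseteq> carrier G \<and> set_prod G \<Lambda> \<Lambda> \<subseteq> set_prod G \<Lambda> F)"

definition defect_set ::
  "('a, 'b) monoid_scheme \<Rightarrow> ('c, 'd) monoid_scheme \<Rightarrow> ('a \<Rightarrow> 'c) \<Rightarrow> 'c set" where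
  "defect_set G H f =
     {inv\<^bsub>H\<^esub> (f y) \<otimes>\<^bsub>H\<^esub> inv\<^bsub>H\<^esub> (f x) \<otimes>\<^bsub>H\<^esub> f (x \<otimes>\<^bsub>G\<^esub> y) | x y.
        x \<in> carrier G \<and> y \<in> carrier G}"

definition quasimorphism ::
  "('a, 'b) monoid_scheme \<Rightarrow> ('c, 'd) monoid_scheme \<Rightarrow> ('a \<Rightarrow> 'c) \<Rightarrow> bool" where
  "quasimorphism G H f \<longleftrightarrow> f \<in> carrier G \<rightarrow> carrier H \<and> finite (defect_set G H f)"

end

theory Submission
  imports Defs
begin

theorem proposition3p17:
  fixes G :: "('a, 'b) monoid_scheme" and H :: "('c, 'd) monoid_scheme"
    and f :: "'a \<Rightarrow> 'c" and \<Xi> :: "'a set"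
  assumes "group G" and "group H"
    and "quasimorphism G H f"
    and "\<And>x. x \<in> carrier G \<Longrightarrow> f (inv\<^bsub>G\<^esub> x) = inv\<^bsub>H\<^esub> (f x)"
    and "f \<one>\<^bsub>G\<^esub> = \<one>\<^bsub>H\<^esub>"
    and "approx_subgroup G \<Xi>"
  shows "approx_subgroup H (f ` \<Xi>)"
proof -
  interpret G: group G by fact
  interpret H: group H by fact
  have fc: "f \<in> carrier G \<rightarrow> carrier H" and fD: "finite (defect_set G H f)"
    using assms(3) unfolding quasimorphism_def by auto
  have fx: "\<And>x. x \<in> carrier G \<Longrightarrow> f x \<in> carrier H" using fc by auto
  obtain F where F: "finite F" "F \<subseteq> carrier G" "set_prod G \<Xi> \<Xi> \<subseteq> set_prod G \<Xi> F"
    and Xc: "\<Xi> \<subseteq> carrier G" and Xi: "(\<lambda>x. inv\<^bsub>G\<^esub> x) ` \<Xi> = \<Xi>" and X1: "\<one>\<^bsub>G\<^esub> \<in> \<Xi>"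
    using assms(6) unfolding approx_subgroup_def by blast
  define D where "D = defect_set G H f"
  define d where "d = (\<lambda>x y. inv\<^bsub>H\<^esub> (f y) \<otimes>\<^bsub>H\<^esub> inv\<^bsub>H\<^esub> (f x) \<otimes>\<^bsub>H\<^esub> f (x \<otimes>\<^bsub>G\<^esub> y))"
  have dD: "\<And>x y. x \<in> carrier G \<Longrightarrow> y \<in> carrier G \<Longrightarrow> d x y \<in> D"
    unfolding D_def defect_set_def d_def by blast
  have dc: "\<And>x y. x \<in> carrier G \<Longrightarrow> y \<in> carrier G \<Longrightarrow> d x y \<in> carrier H"
    unfolding d_def using fx by auto
  have Dc: "D \<subseteq> carrier H" unfolding D_def defect_set_def using fx by auto
  have key: "\<And>x y. x \<in> carrier G \<Longrightarrow> y \<in> carrier G \<Longrightarrow>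
      f (x \<otimes>\<^bsub>G\<^esub> y) = f x \<otimes>\<^bsub>H\<^esub> f y \<otimes>\<^bsub>H\<^esub> d x y"
  proof -
    fix x y assume x: "x \<in> carrier G" and y: "y \<in> carrier G"
    have fy: "f y \<in> carrier H" and fxx: "f x \<in> carrier H" and fxy: "f (x \<otimes>\<^bsub>G\<^esub> y) \<in> carrier H"
      using fx x y by auto
    have "f x \<otimes>\<^bsub>H\<^esub> f y \<otimes>\<^bsub>H\<^esub> d x y
      = f x \<otimes>\<^bsub>H\<^esub> (f y \<otimes>\<^bsub>H\<^esub> (inv\<^bsub>H\<^esub> (f y) \<otimes>\<^bsub>H\<^esub> (inv\<^bsub>H\<^esub> (f x) \<otimes>\<^bsub>H\<^esub> f (x \<otimes>\<^bsub>G\<^esub> y))))"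
      unfolding d_def using fy fxx fxy by (simp add: H.m_assoc)
    also have "\<dots> = f x \<otimes>\<^bsub>H\<^esub> (inv\<^bsub>H\<^esub> (f x) \<otimes>\<^bsub>H\<^esub> f (x \<otimes>\<^bsub>G\<^esub> y))"
      using fy fxx fxy by (simp add: H.r_inv_ex H.m_assoc[symmetric] H.inv_solve_left H.inv_solve_right)
    also have "\<dots> = f (x \<otimes>\<^bsub>G\<^esub> y)"
      using fy fxx fxy by (simp add: H.m_assoc[symmetric])
    finally show "f (x \<otimes>\<^bsub>G\<^esub> y) = f x \<otimes>\<^bsub>H\<^esub> f y \<otimes>\<^bsub>H\<^esub> d x y" by simp
  qed
  define F' where "F' = (\<lambda>(c, e, e'). f c \<otimes>\<^bsub>H\<^esub> e \<otimes>\<^bsub>H\<^esub> inv\<^bsub>H\<^esub> e') ` (F \<times> D \<times> D)"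
  have "finite F'" unfolding F'_def using F(1) fD D_def by auto
  moreover have "F' \<subseteq> carrier H" unfolding F'_def using F(2) Dc fx by (auto intro!: H.m_closed H.inv_closed)
  moreover have "set_prod H (f ` \<Xi>) (f ` \<Xi>) \<subseteq> set_prod H (f ` \<Xi>) F'"
  proof
    fix z assume "z \<in> set_prod H (f ` \<Xi>) (f ` \<Xi>)"
    then obtain a b where ab: "a \<in> \<Xi>" "b \<in> \<Xi>" and z: "z = f a \<otimes>\<^bsub>H\<^esub> f b"
      unfolding set_prod_def by blast
    have "a \<otimes>\<^bsub>G\<^esub> b \<in> set_prod G \<Xi> \<Xi>" unfolding set_prod_def using ab by blast
    then obtain \<xi> c where xc: "\<xi> \<in> \<Xi>" "c \<in> F" and e: "a \<otimes>\<^bsub>G\<^esub> b = \<xi> \<otimes>\<^bsub>G\<^esub> c"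
      using F(3) unfolding set_prod_def by blast
    have a: "a \<in> carrier G" and b: "b \<in> carrier G" and xi: "\<xi> \<in> carrier G" and c: "c \<in> carrier G"
      using ab xc Xc F(2) by auto
    have "f (a \<otimes>\<^bsub>G\<^esub> b) = f a \<otimes>\<^bsub>H\<^esub> f b \<otimes>\<^bsub>H\<^esub> d a b" using key a b by blast
    hence "z = f (a \<otimes>\<^bsub>G\<^esub> b) \<otimes>\<^bsub>H\<^esub> inv\<^bsub>H\<^esub> d a b"
      using z fx a b dc by (simp add: H.m_assoc)
    also have "\<dots> = f \<xi> \<otimes>\<^bsub>H\<^esub> (f c \<otimes>\<^bsub>H\<^esub> d \<xi> c \<otimes>\<^bsub>H\<^esub> inv\<^bsub>H\<^esub> d a b)"
      using e key[OF xi c] fx xi c dc a b by (simp add: H.m_assoc)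
    finally have "z = f \<xi> \<otimes>\<^bsub>H\<^esub> (f c \<otimes>\<^bsub>H\<^esub> d \<xi> c \<otimes>\<^bsub>H\<^esub> inv\<^bsub>H\<^esub> d a b)" .
    moreover have "f c \<otimes>\<^bsub>H\<^esub> d \<xi> c \<otimes>\<^bsub>H\<^esub> inv\<^bsub>H\<^esub> d a b \<in> F'"
      unfolding F'_def using xc dD xi c a b by force
    ultimately show "z \<in> set_prod H (f ` \<Xi>) F'" unfolding set_prod_def using xc by blast
  qed
  moreover have "f ` \<Xi> \<subseteq> carrier H" using Xc fx by auto
  moreover have "(\<lambda>x. inv\<^bsub>H\<^esub> x) ` f ` \<Xi> = f ` \<Xi>"
  proof -
    have "(\<lambda>x. inv\<^bsub>H\<^esub> x) ` f ` \<Xi> = f ` (\<lambda>x. inv\<^bsub>G\<^esub> x) ` \<Xi>"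
      using assms(4) Xc by (force simp: image_image intro!: image_cong)
    thus ?thesis using Xi by simp
  qed
  moreover have "\<one>\<^bsub>H\<^esub> \<in> f ` \<Xi>" using X1 assms(5) by force
  ultimately show ?thesis unfolding approx_subgroup_def by blast
qed

end
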